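(* The following are equivalent for an integral domain $D$: (1) $D$ is a $\ast$-SH domain; (2) $D$ is of finite $\ast$-character and for every pair $P,Q$ of distinct maximal $\ast$-ideals of $D$, $P\cap Q$ contains no nonzero prime ideal.
   Context: $\ast$ is a star operation on $D$ of finite character. A $\ast$-ideal is a nonzero fractional ideal $I$ with $I^\ast=I$; it is of finite type if $I=J^\ast$ for some nonzero finitely generated $J$. A maximal $\ast$-ideal is an integral $\ast$-ideal maximal among proper integral $\ast$-ideals. $D$ is of finite $\ast$-character if every nonzero nonunit of $D$ lies in at most finitely many maximal $\ast$-ideals. A $\ast$-homog ideal is an integral $\ast$-ideal $I$ of finite type with $I\subsetneq D$ such that $(J+L)^{\ast}\neq D$ for every pair $J,L$ of proper integral $\ast$-ideals of finite type containing $I$. $D$ is a $\ast$-SH domain if for every nonzero nonunit $x\in D$, $xD=(I_1\cdots I_n)^\ast$ for some finitely many $\ast$-homog ideals $I_1,\dots,I_n$. *)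

theory Defs
  imports "HOL-Computational_Algebra.Fraction_Field"
begin

text \<open>The integral domain D is the type 'a :: idom; its quotient field K is 'a fract.
  D is identified with its image Dset in K.  All (fractional and integral) ideals are
  subsets of K.\<close>

definition emb :: "'a::idom \<Rightarrow> 'a fract" where
  "emb a = Fract a 1"

definition Dset :: "'a::idom fract set" where
  "Dset = range emb"

definition smult_set :: "'a::idom fract \<Rightarrow> 'a fract set \<Rightarrow> 'a fract set" where
  "smult_set x I = (\<lambda>y. x * y) ` I"

definition submod :: "'a::idom fract set \<Rightarrow> bool" where
  "submod I \<longleftrightarrow> 0 \<in> I \<and> (\<forall>a\<in>I. \<forall>b\<in>I. a + b \<in> I) \<and> (\<forall>d\<in>Dset. \<forall>a\<in>I. d * a \<in> I)"

definition frac_ideal :: "'a::idom fract set \<Rightarrow> bool" where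
  "frac_ideal I \<longleftrightarrow> submod I \<and> I \<noteq> {0} \<and>
     (\<exists>d\<in>Dset. d \<noteq> 0 \<and> smult_set d I \<subseteq> Dset)"

definition gen :: "'a::idom fract set \<Rightarrow> 'a fract set" where
  "gen S = {\<Sum>s\<in>S. emb (c s) * s | c. True}"

definition fin_gen :: "'a::idom fract set \<Rightarrow> bool" where
  "fin_gen J \<longleftrightarrow> (\<exists>S. finite S \<and> J = gen S)"

definition star_operation :: "('a::idom fract set \<Rightarrow> 'a fract set) \<Rightarrow> bool" where
  "star_operation st \<longleftrightarrow>
     (\<forall>I. frac_ideal I \<longrightarrow> frac_ideal (st I)) \<and>
     (\<forall>x. x \<noteq> 0 \<longrightarrow> st (smult_set x Dset) = smult_set x Dset) \<and>
     (\<forall>x I. x \<noteq> 0 \<longrightarrow> frac_ideal I \<longrightarrow> st (smult_set x I) = smult_set x (st I)) \<and>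
     (\<forall>I J. frac_ideal I \<longrightarrow> frac_ideal J \<longrightarrow> I \<subseteq> J \<longrightarrow> st I \<subseteq> st J) \<and>
     (\<forall>I. frac_ideal I \<longrightarrow> I \<subseteq> st I) \<and>
     (\<forall>I. frac_ideal I \<longrightarrow> st (st I) = st I)"

definition finite_character :: "('a::idom fract set \<Rightarrow> 'a fract set) \<Rightarrow> bool" where
  "finite_character st \<longleftrightarrow>
     (\<forall>I. frac_ideal I \<longrightarrow>
        st I = \<Union>{st J | J. frac_ideal J \<and> fin_gen J \<and> J \<subseteq> I})"

definition integral :: "'a::idom fract set \<Rightarrow> bool" where
  "integral I \<longleftrightarrow> I \<subseteq> Dset"

definition star_ideal :: "('a::idom fract set \<Rightarrow> 'a fract set) \<Rightarrow> 'a fract set \<Rightarrow> bool" where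
  "star_ideal st I \<longleftrightarrow> frac_ideal I \<and> st I = I"

definition finite_type :: "('a::idom fract set \<Rightarrow> 'a fract set) \<Rightarrow> 'a fract set \<Rightarrow> bool" where
  "finite_type st I \<longleftrightarrow> (\<exists>J. frac_ideal J \<and> fin_gen J \<and> I = st J)"

definition max_star_ideal :: "('a::idom fract set \<Rightarrow> 'a fract set) \<Rightarrow> 'a fract set \<Rightarrow> bool" where
  "max_star_ideal st M \<longleftrightarrow> integral M \<and> star_ideal st M \<and> M \<noteq> Dset \<and>
     (\<forall>N. integral N \<and> star_ideal st N \<and> N \<noteq> Dset \<and> M \<subseteq> N \<longrightarrow> N = M)"

definition finite_star_character :: "('a::idom fract set \<Rightarrow> 'a fract set) \<Rightarrow> bool" where
  "finite_star_character st \<longleftrightarrow>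
     (\<forall>x. x \<noteq> 0 \<longrightarrow> \<not> x dvd 1 \<longrightarrow> finite {M. max_star_ideal st M \<and> emb x \<in> M})"

definition ideal_sum :: "'a::idom fract set \<Rightarrow> 'a fract set \<Rightarrow> 'a fract set" where
  "ideal_sum I J = {a + b | a b. a \<in> I \<and> b \<in> J}"

definition ideal_prod :: "'a::idom fract set \<Rightarrow> 'a fract set \<Rightarrow> 'a fract set" where
  "ideal_prod I J = {sum_list (map (\<lambda>(a, b). a * b) xs) | xs. set xs \<subseteq> I \<times> J}"

definition ideal_prod_list :: "'a::idom fract set list \<Rightarrow> 'a fract set" where
  "ideal_prod_list Is = foldr ideal_prod Is Dset"

definition star_homog :: "('a::idom fract set \<Rightarrow> 'a fract set) \<Rightarrow> 'a fract set \<Rightarrow> bool" where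
  "star_homog st I \<longleftrightarrow> integral I \<and> star_ideal st I \<and> finite_type st I \<and> I \<noteq> Dset \<and>
     (\<forall>J L. integral J \<and> star_ideal st J \<and> finite_type st J \<and> J \<noteq> Dset \<and> I \<subseteq> J \<and>
            integral L \<and> star_ideal st L \<and> finite_type st L \<and> L \<noteq> Dset \<and> I \<subseteq> L \<longrightarrow>
            st (ideal_sum J L) \<noteq> Dset)"

definition star_SH :: "('a::idom fract set \<Rightarrow> 'a fract set) \<Rightarrow> bool" where
  "star_SH st \<longleftrightarrow>
     (\<forall>x. x \<noteq> 0 \<longrightarrow> \<not> x dvd 1 \<longrightarrow>
        (\<exists>Is. (\<forall>I\<in>set Is. star_homog st I) \<and>
              smult_set (emb x) Dset = st (ideal_prod_list Is)))"

definition nonzero_prime_ideal :: "'a::idom fract set \<Rightarrow> bool" where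
  "nonzero_prime_ideal P \<longleftrightarrow> integral P \<and> submod P \<and> P \<noteq> {0} \<and> P \<noteq> Dset \<and>
     (\<forall>a\<in>Dset. \<forall>b\<in>Dset. a * b \<in> P \<longrightarrow> a \<in> P \<or> b \<in> P)"

end

theory Submission
  imports Defs
begin


abbreviation DD where "DD \<equiv> Dset"

lemma emb_add: "emb a + emb b = emb (a+b)" by (simp add: emb_def)
lemma emb_mult: "emb a * emb b = emb (a*b)" by (simp add: emb_def)
lemma emb_0[simp]: "emb 0 = 0" by (simp add: emb_def Zero_fract_def)
lemma emb_1[simp]: "emb 1 = 1" by (simp add: emb_def One_fract_def)
lemma emb_minus: "- emb a = emb (- a)" by (simp add: emb_def)
lemma emb_inj: "emb a = emb b \<longleftrightarrow> a = b" by (simp add: emb_def eq_fract)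
lemma emb_eq0: "emb a = 0 \<longleftrightarrow> a = 0" using emb_inj[of a 0] by simp

lemma D_add: "a \<in> DD \<Longrightarrow> b \<in> DD \<Longrightarrow> a + b \<in> DD"
  unfolding Dset_def by (auto simp: emb_add)
lemma D_mult: "a \<in> DD \<Longrightarrow> b \<in> DD \<Longrightarrow> a * b \<in> DD"
  unfolding Dset_def by (auto simp: emb_mult)
lemma D_minus: "a \<in> DD \<Longrightarrow> - a \<in> DD"
  unfolding Dset_def by (auto simp: emb_minus)
lemma D_0[simp]: "(0::'a::idom fract) \<in> DD" unfolding Dset_def by (metis emb_0 rangeI)
lemma D_1[simp]: "(1::'a::idom fract) \<in> DD" unfolding Dset_def by (metis emb_1 rangeI)
lemma D_emb[simp]: "emb a \<in> DD" unfolding Dset_def by simp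

lemma denom_exists: "\<exists>d\<in>DD. d \<noteq> 0 \<and> d * (z::'a::idom fract) \<in> DD"
proof (cases z)
  case (Fract a b)
  then have "emb b * z = emb a" by (simp add: emb_def eq_fract mult.commute)
  then show ?thesis using Fract by (metis D_emb emb_eq0)
qed

lemma smult_set_1[simp]: "smult_set 1 I = I" by (simp add: smult_set_def)
lemma smult_set_mem: "y \<in> I \<Longrightarrow> x * y \<in> smult_set x I" unfolding smult_set_def by blast
lemma smult_set_comp: "smult_set x (smult_set y I) = smult_set (x*y) I"
  by (auto simp: smult_set_def image_image mult.assoc)
lemma smult_set_mono: "I \<subseteq> J \<Longrightarrow> smult_set x I \<subseteq> smult_set x J"
  by (auto simp: smult_set_def)

lemma submod_0: "submod I \<Longrightarrow> 0 \<in> I" by (simp add: submod_def)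
lemma submod_add: "submod I \<Longrightarrow> a \<in> I \<Longrightarrow> b \<in> I \<Longrightarrow> a + b \<in> I" by (simp add: submod_def)
lemma submod_mult: "submod I \<Longrightarrow> d \<in> DD \<Longrightarrow> a \<in> I \<Longrightarrow> d * a \<in> I" by (simp add: submod_def)
lemma submod_D: "submod DD" by (simp add: submod_def D_add D_mult)

lemma submod_inter: "submod A \<Longrightarrow> submod B \<Longrightarrow> submod (A \<inter> B)"
  by (simp add: submod_def)

lemma submod_smult: "submod I \<Longrightarrow> submod (smult_set x I)"
  unfolding submod_def smult_set_def
proof (intro conjI ballI)
  assume a: "0 \<in> I \<and> (\<forall>a\<in>I. \<forall>b\<in>I. a + b \<in> I) \<and> (\<forall>d\<in>DD. \<forall>a\<in>I. d * a \<in> I)"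
  show "0 \<in> (*) x ` I" using a by (intro rev_image_eqI[of 0]) auto
  fix u v assume "u \<in> (*) x ` I" "v \<in> (*) x ` I"
  then obtain a b where "a \<in> I" "b \<in> I" "u = x*a" "v = x*b" by auto
  then show "u + v \<in> (*) x ` I" using a by (intro rev_image_eqI[of "a+b"]) (auto simp: distrib_left)
next
  assume a: "0 \<in> I \<and> (\<forall>a\<in>I. \<forall>b\<in>I. a + b \<in> I) \<and> (\<forall>d\<in>DD. \<forall>a\<in>I. d * a \<in> I)"
  fix d u :: "'a fract" assume "d \<in> DD" "u \<in> (*) x ` I"
  then obtain a where "a \<in> I" "u = x*a" by auto
  moreover have "d * u = x * (d * a)" using \<open>u = x*a\<close> by (simp add: mult.left_commute)
  ultimately show "d * u \<in> (*) x ` I" using a \<open>d \<in> DD\<close> by (intro rev_image_eqI[of "d*a"]) auto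
qed

lemma submod_one: "submod I \<Longrightarrow> integral I \<Longrightarrow> 1 \<in> I \<Longrightarrow> I = DD"
  unfolding integral_def by (auto dest: submod_mult[of I _ 1])

lemma frac_D: "frac_ideal DD"
  unfolding frac_ideal_def using submod_D
  by (auto simp: smult_set_def intro!: bexI[of _ 1]) (metis D_1 zero_neq_one singletonD)

lemma frac_integral: "submod I \<Longrightarrow> integral I \<Longrightarrow> a \<in> I \<Longrightarrow> a \<noteq> 0 \<Longrightarrow> frac_ideal I"
  unfolding frac_ideal_def integral_def by (auto intro!: bexI[of _ 1])

lemma frac_nonzero: "frac_ideal I \<Longrightarrow> \<exists>a\<in>I. a \<noteq> 0"
  unfolding frac_ideal_def submod_def by auto

lemma frac_smult: assumes "frac_ideal I" "x \<noteq> 0" shows "frac_ideal (smult_set x I)"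
proof -
  obtain d where d: "d \<in> DD" "d \<noteq> 0" "smult_set d I \<subseteq> DD" using assms(1) unfolding frac_ideal_def by auto
  obtain e where e: "e \<in> DD" "e \<noteq> 0" "e * x \<in> DD" using denom_exists by blast
  obtain a where a: "a \<in> I" "a \<noteq> 0" using frac_nonzero[OF assms(1)] by auto
  have "smult_set (e*d) (smult_set x I) \<subseteq> DD"
  proof
    fix z assume "z \<in> smult_set (e*d) (smult_set x I)"
    then obtain y where y: "y \<in> I" "z = (e*x) * (d*y)" by (auto simp: smult_set_def algebra_simps)
    have "d*y \<in> DD" using d(3) y(1) by (auto simp: smult_set_def)
    then show "z \<in> DD" using y e D_mult by auto
  qed
  moreover have "x * a \<in> smult_set x I" "x * a \<noteq> 0" using a assms(2) by (auto simp: smult_set_def)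
  ultimately show ?thesis using assms d e submod_smult unfolding frac_ideal_def
    by (metis D_mult no_zero_divisors singletonD)
qed

definition hull :: "'a::idom fract set \<Rightarrow> 'a fract set" where
  "hull S = \<Inter>{C. submod C \<and> S \<subseteq> C}"

lemma submod_hull: "submod (hull S)" unfolding hull_def submod_def by auto
lemma hull_sub: "S \<subseteq> hull S" unfolding hull_def by auto
lemma hull_least: "submod C \<Longrightarrow> S \<subseteq> C \<Longrightarrow> hull S \<subseteq> C" unfolding hull_def by auto
lemma hull_mono: "S \<subseteq> T \<Longrightarrow> hull S \<subseteq> hull T"
  by (meson hull_least hull_sub order_trans submod_hull)

lemma submod_sum: assumes "submod C" "finite A" "\<And>s. s \<in> A \<Longrightarrow> f s \<in> C" shows "sum f A \<in> C"
  using assms(2,3) by (induction A rule: finite_induct) (auto simp: submod_0[OF assms(1)] submod_add[OF assms(1)])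

lemma gen_hull: assumes "finite S" shows "gen S = hull S"
proof
  have sm: "submod (gen S)"
    unfolding submod_def gen_def
  proof (intro conjI ballI)
    show "0 \<in> {\<Sum>s\<in>S. emb (c s) * s |c. True}" by (auto intro!: exI[of _ "\<lambda>_. 0"])
  next
    fix a b assume "a \<in> {\<Sum>s\<in>S. emb (c s) * s |c. True}" "b \<in> {\<Sum>s\<in>S. emb (c s) * s |c. True}"
    then obtain c1 c2 where "a = (\<Sum>s\<in>S. emb (c1 s) * s)" "b = (\<Sum>s\<in>S. emb (c2 s) * s)" by auto
    then have "a + b = (\<Sum>s\<in>S. emb (c1 s + c2 s) * s)"
      by (simp add: sum.distrib emb_add[symmetric] distrib_right)
    then show "a + b \<in> {\<Sum>s\<in>S. emb (c s) * s |c. True}" by (intro CollectI exI[of _ "\<lambda>s. c1 s + c2 s"]) simp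
  next
    fix d a :: "'a fract" assume "d \<in> DD" "a \<in> {\<Sum>s\<in>S. emb (c s) * s |c. True}"
    then obtain e c where "d = emb e" "a = (\<Sum>s\<in>S. emb (c s) * s)" by (auto simp: Dset_def)
    then have "d * a = (\<Sum>s\<in>S. emb (e * c s) * s)"
      by (simp add: sum_distrib_left emb_mult[symmetric] mult.assoc)
    then show "d * a \<in> {\<Sum>s\<in>S. emb (c s) * s |c. True}" by (intro CollectI exI[of _ "\<lambda>s. e * c s"]) simp
  qed
  have sub: "S \<subseteq> gen S"
  proof
    fix t assume t: "t \<in> S"
    have e: "\<And>s. emb (if s = t then 1 else 0) * s = (if s = t then s else 0)" by simp
    have "(\<Sum>s\<in>S. emb (if s = t then 1 else 0) * s) = (\<Sum>s\<in>S. (if s = t then s else 0))"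
      by (rule sum.cong) (simp_all only: e)
    also have "\<dots> = t" using assms t by (simp add: sum.delta)
    finally have "(\<Sum>s\<in>S. emb (if s = t then 1 else 0) * s) = t" .
    then show "t \<in> gen S" unfolding gen_def by (intro CollectI exI[of _ "\<lambda>s. if s = t then 1 else 0"]) simp
  qed
  show "hull S \<subseteq> gen S" using hull_least[OF sm sub] .
  show "gen S \<subseteq> hull S"
  proof
    fix a assume "a \<in> gen S"
    then obtain c where "a = (\<Sum>s\<in>S. emb (c s) * s)" by (auto simp: gen_def)
    moreover have "\<forall>s\<in>S. emb (c s) * s \<in> hull S"
      using hull_sub submod_mult[OF submod_hull] D_emb by blast
    ultimately show "a \<in> hull S" using submod_sum[OF submod_hull assms, of "\<lambda>s. emb (c s) * s" S] by simp
  qed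
qed



lemma submod_ideal_sum: assumes "submod A" "submod B" shows "submod (ideal_sum A B)"
  unfolding submod_def ideal_sum_def
proof (intro conjI ballI)
  show "0 \<in> {a + b |a b. a \<in> A \<and> b \<in> B}" using assms by (auto simp: submod_0 intro!: exI[of _ 0])
next
  fix u v assume "u \<in> {a + b |a b. a \<in> A \<and> b \<in> B}" "v \<in> {a + b |a b. a \<in> A \<and> b \<in> B}"
  then obtain a b a' b' where "a \<in> A" "b \<in> B" "a' \<in> A" "b' \<in> B" "u = a + b" "v = a' + b'" by auto
  moreover have "u + v = (a + a') + (b + b')" using calculation by (simp add: algebra_simps)
  ultimately show "u + v \<in> {a + b |a b. a \<in> A \<and> b \<in> B}" using assms
    by (intro CollectI exI[of _ "a + a'"] exI[of _ "b + b'"]) (auto intro: submod_add)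
next
  fix d u :: "'a fract" assume "d \<in> DD" "u \<in> {a + b |a b. a \<in> A \<and> b \<in> B}"
  then obtain a b where "a \<in> A" "b \<in> B" "u = a + b" by auto
  moreover have "d * u = d * a + d * b" using calculation by (simp add: algebra_simps)
  ultimately show "d * u \<in> {a + b |a b. a \<in> A \<and> b \<in> B}" using assms \<open>d \<in> DD\<close> by (auto intro: submod_mult)
qed

lemma ideal_sum_left: "submod B \<Longrightarrow> A \<subseteq> ideal_sum A B"
  unfolding ideal_sum_def by (force simp: submod_0)
lemma ideal_sum_right: "submod A \<Longrightarrow> B \<subseteq> ideal_sum A B"
  unfolding ideal_sum_def by (force simp: submod_0)
lemma ideal_sum_least: "submod C \<Longrightarrow> A \<subseteq> C \<Longrightarrow> B \<subseteq> C \<Longrightarrow> ideal_sum A B \<subseteq> C"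
  unfolding ideal_sum_def by (auto intro: submod_add)

lemma ideal_prod_mem: "a \<in> A \<Longrightarrow> b \<in> B \<Longrightarrow> a * b \<in> ideal_prod A B"
  unfolding ideal_prod_def by (intro CollectI exI[of _ "[(a,b)]"]) auto

lemma sum_list_mult_left: "(d::'a::idom fract) * sum_list (map (\<lambda>(a, b). a * b) xs) = sum_list (map (\<lambda>(a, b). a * b) (map (\<lambda>(a,b). (d*a, b)) xs))"
  by (induction xs) (auto simp: algebra_simps split: prod.splits)

lemma submod_ideal_prod: assumes "submod A" shows "submod (ideal_prod A B)"
  unfolding submod_def ideal_prod_def
proof (intro conjI ballI)
  show "0 \<in> {sum_list (map (\<lambda>(a, b). a * b) xs) |xs. set xs \<subseteq> A \<times> B}"
    by (intro CollectI exI[of _ "[]"]) auto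
next
  fix u v assume "u \<in> {sum_list (map (\<lambda>(a, b). a * b) xs) |xs. set xs \<subseteq> A \<times> B}"
    "v \<in> {sum_list (map (\<lambda>(a, b). a * b) xs) |xs. set xs \<subseteq> A \<times> B}"
  then obtain xs ys where "set xs \<subseteq> A \<times> B" "set ys \<subseteq> A \<times> B" "u = sum_list (map (\<lambda>(a, b). a * b) xs)"
    "v = sum_list (map (\<lambda>(a, b). a * b) ys)" by auto
  then show "u + v \<in> {sum_list (map (\<lambda>(a, b). a * b) xs) |xs. set xs \<subseteq> A \<times> B}"
    by (intro CollectI exI[of _ "xs @ ys"]) auto
next
  fix d u :: "'a fract" assume d: "d \<in> DD" and "u \<in> {sum_list (map (\<lambda>(a, b). a * b) xs) |xs. set xs \<subseteq> A \<times> B}"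
  then obtain xs where xs: "set xs \<subseteq> A \<times> B" "u = sum_list (map (\<lambda>(a, b). a * b) xs)" by auto
  have "set (map (\<lambda>(a,b). (d*a, b)) xs) \<subseteq> A \<times> B" using xs(1) d submod_mult[OF assms] by auto
  then show "d * u \<in> {sum_list (map (\<lambda>(a, b). a * b) xs) |xs. set xs \<subseteq> A \<times> B}"
    using xs(2) sum_list_mult_left[of d xs] by (intro CollectI exI[of _ "map (\<lambda>(a,b). (d*a, b)) xs"]) auto
qed

lemma ideal_prod_least: assumes "submod C" "\<And>a b. a \<in> A \<Longrightarrow> b \<in> B \<Longrightarrow> a * b \<in> C"
  shows "ideal_prod A B \<subseteq> C"
proof
  fix u assume "u \<in> ideal_prod A B"
  then obtain xs where xs: "set xs \<subseteq> A \<times> B" "u = sum_list (map (\<lambda>(a, b). a * b) xs)"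
    unfolding ideal_prod_def by auto
  have "sum_list (map (\<lambda>(a, b). a * b) xs) \<in> C" using xs(1)
    by (induction xs) (auto simp: submod_0[OF assms(1)] intro!: submod_add[OF assms(1)] assms(2))
  then show "u \<in> C" using xs by simp
qed

lemma ideal_prod_comm: "ideal_prod A B = ideal_prod B A"
proof -
  have "ideal_prod A B \<subseteq> ideal_prod B A" for A B :: "'a fract set"
  proof
    fix u assume "u \<in> ideal_prod A B"
    then obtain xs where xs: "set xs \<subseteq> A \<times> B" "u = sum_list (map (\<lambda>(a, b). a * b) xs)"
      unfolding ideal_prod_def by auto
    have "sum_list (map (\<lambda>(a, b). a * b) xs) = sum_list (map (\<lambda>(a, b). a * b) (map (\<lambda>(a,b). (b,a)) xs))"
      by (induction xs) (auto simp: mult.commute)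
    moreover have "set (map (\<lambda>(a,b). (b,a)) xs) \<subseteq> B \<times> A" using xs(1) by auto
    ultimately show "u \<in> ideal_prod B A" unfolding ideal_prod_def using xs(2)
      by (intro CollectI exI[of _ "map (\<lambda>(a,b). (b,a)) xs"]) auto
  qed
  then show ?thesis by blast
qed

lemma ideal_prod_mono: "submod A' \<Longrightarrow> A \<subseteq> A' \<Longrightarrow> B \<subseteq> B' \<Longrightarrow> ideal_prod A B \<subseteq> ideal_prod A' B'"
  by (rule ideal_prod_least) (auto simp: submod_ideal_prod intro: ideal_prod_mem)

lemma ideal_prod_hull: "ideal_prod (hull S) (hull T) = hull {s * t | s t. s \<in> S \<and> t \<in> T}"
  (is "_ = hull ?ST")
proof
  let ?H = "hull ?ST"
  have step1: "a * t \<in> ?H" if "a \<in> hull S" "t \<in> T" for a t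
  proof -
    have "submod {a. a * t \<in> ?H}"
      unfolding submod_def using submod_hull[of ?ST]
      by (auto simp: submod_0 distrib_right mult.assoc intro: submod_add submod_mult)
    moreover have "S \<subseteq> {a. a * t \<in> ?H}" using that hull_sub[of ?ST] by auto
    ultimately show ?thesis using hull_least that by blast
  qed
  have "a * b \<in> ?H" if "a \<in> hull S" "b \<in> hull T" for a b
  proof -
    have "submod {b. a * b \<in> ?H}"
      unfolding submod_def using submod_hull[of ?ST]
      by (auto simp: submod_0 distrib_left mult.left_commute intro: submod_add submod_mult)
    moreover have "T \<subseteq> {b. a * b \<in> ?H}" using step1 that by auto
    ultimately show ?thesis using hull_least that by blast
  qed
  then show "ideal_prod (hull S) (hull T) \<subseteq> ?H"
    by (intro ideal_prod_least submod_hull)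
  show "?H \<subseteq> ideal_prod (hull S) (hull T)"
    by (rule hull_least[OF submod_ideal_prod[OF submod_hull]])
       (auto intro!: ideal_prod_mem hull_sub[THEN subsetD])
qed

lemma hull_D: "hull {1::'a::idom fract} = DD"
proof (rule equalityI)
  show "hull {1} \<subseteq> (DD::'a fract set)" by (rule hull_least[OF submod_D]) simp
  show "(DD::'a fract set) \<subseteq> hull {1}"
  proof (rule subsetI)
    fix d :: "'a fract" assume d: "d \<in> DD"
    have "d * 1 \<in> hull {1::'a fract}" using submod_mult[OF submod_hull d] hull_sub[of "{1::'a fract}"] by blast
    then show "d \<in> hull {1}" by simp
  qed
qed

primrec prodsL :: "'a::idom fract set list \<Rightarrow> 'a fract set" where
  "prodsL [] = {1}"
| "prodsL (A # As) = {a * p | a p. a \<in> A \<and> p \<in> prodsL As}"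

lemma ideal_prod_list_hull: "ideal_prod_list (map (\<lambda>M. hull (G M)) Ms) = hull (prodsL (map G Ms))"
proof (induction Ms)
  case Nil
  then show ?case by (simp add: ideal_prod_list_def hull_D)
next
  case (Cons M Ms)
  have "ideal_prod_list (map (\<lambda>M. hull (G M)) (M # Ms)) = ideal_prod (hull (G M)) (ideal_prod_list (map (\<lambda>M. hull (G M)) Ms))"
    by (simp add: ideal_prod_list_def)
  also have "\<dots> = hull (prodsL (map G (M # Ms)))" using Cons by (simp add: ideal_prod_hull)
  finally show ?case .
qed

definition ifrac :: "'a::idom fract set \<Rightarrow> bool" where
  "ifrac I \<longleftrightarrow> frac_ideal I \<and> integral I"

lemma ifrac_D: "ifrac DD" by (simp add: ifrac_def frac_D integral_def)

lemma frac_submod: "frac_ideal I \<Longrightarrow> submod I" by (simp add: frac_ideal_def)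

lemma ifrac_prod: assumes "ifrac A" "ifrac B" shows "ifrac (ideal_prod A B)"
proof -
  obtain a b where "a \<in> A" "b \<in> B" "a \<noteq> 0" "b \<noteq> 0" using assms frac_nonzero unfolding ifrac_def by meson
  moreover have "integral (ideal_prod A B)" unfolding integral_def
    using assms by (intro ideal_prod_least submod_D) (auto simp: ifrac_def integral_def intro: D_mult)
  ultimately show ?thesis using assms unfolding ifrac_def
    by (meson frac_integral frac_submod ideal_prod_mem no_zero_divisors submod_ideal_prod)
qed

lemma ifrac_prod_list: "\<forall>I\<in>set Is. ifrac I \<Longrightarrow> ifrac (ideal_prod_list Is)"
  by (induction Is) (auto simp: ideal_prod_list_def ifrac_D ifrac_prod)

lemma ifrac_sum: assumes "ifrac A" "ifrac B" shows "ifrac (ideal_sum A B)"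
proof -
  have s: "submod (ideal_sum A B)" using assms by (simp add: ifrac_def frac_submod submod_ideal_sum)
  obtain a where "a \<in> A" "a \<noteq> 0" using assms frac_nonzero unfolding ifrac_def by meson
  moreover have "integral (ideal_sum A B)" unfolding integral_def
    using assms by (intro ideal_sum_least submod_D) (auto simp: ifrac_def integral_def)
  ultimately show ?thesis using s assms ideal_sum_left unfolding ifrac_def
    by (meson frac_integral frac_submod subsetD)
qed

lemma ifrac_smult: "ifrac I \<Longrightarrow> x \<in> DD \<Longrightarrow> x \<noteq> 0 \<Longrightarrow> ifrac (smult_set x I)"
  unfolding ifrac_def integral_def using frac_smult by (auto simp: smult_set_def intro: D_mult)



definition primeish :: "'a::idom fract set \<Rightarrow> bool" where
  "primeish P \<longleftrightarrow> submod P \<and> integral P \<and> 1 \<notin> P \<and> (\<forall>a\<in>DD. \<forall>b\<in>DD. a * b \<in> P \<longrightarrow> a \<in> P \<or> b \<in> P)"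

lemma primeish_pow: assumes "primeish P" "x \<in> DD" "x ^ k \<in> P" shows "x \<in> P"
  using assms(3)
proof (induction k)
  case 0 then show ?case using assms(1) by (simp add: primeish_def)
next
  case (Suc k)
  have "x ^ k \<in> DD" using assms(2) by (induction k) (auto intro: D_mult)
  then show ?case using Suc assms by (auto simp: primeish_def)
qed

lemma primeish_one_notin: "primeish P \<Longrightarrow> P \<noteq> DD" by (auto simp: primeish_def)

lemma primeish_prod_list:
  assumes "primeish P" "\<forall>I\<in>set Is. ifrac I" "ideal_prod_list Is \<subseteq> P"
  shows "\<exists>I\<in>set Is. I \<subseteq> P"
  using assms(2,3)
proof (induction Is)
  case Nil
  then have "DD \<subseteq> P" by (simp add: ideal_prod_list_def)
  then have "1 \<in> P" using D_1 by blast
  then show ?case using assms(1) by (simp add: primeish_def)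
next
  case (Cons I Is)
  let ?Q = "ideal_prod_list Is"
  have Q: "ifrac ?Q" using Cons ifrac_prod_list by auto
  have IQ: "ideal_prod I ?Q \<subseteq> P" using Cons by (simp add: ideal_prod_list_def)
  show ?case
  proof (cases "I \<subseteq> P")
    case True then show ?thesis by simp
  next
    case False
    then obtain a where a: "a \<in> I" "a \<notin> P" by auto
    have "?Q \<subseteq> P"
    proof
      fix b assume b: "b \<in> ?Q"
      have "a * b \<in> P" using IQ ideal_prod_mem[OF a(1) b] by auto
      moreover have "a \<in> DD" "b \<in> DD" using a b Cons.prems Q by (auto simp: ifrac_def integral_def)
      ultimately show "b \<in> P" using a assms(1) by (auto simp: primeish_def)
    qed
    then show ?thesis using Cons by auto
  qed
qed

context
  fixes st :: "'a::idom fract set \<Rightarrow> 'a fract set"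
  assumes so: "star_operation st"
begin

lemma st_frac: "frac_ideal I \<Longrightarrow> frac_ideal (st I)" using so by (simp add: star_operation_def)
lemma st_principal: "x \<noteq> 0 \<Longrightarrow> st (smult_set x DD) = smult_set x DD" using so by (simp add: star_operation_def)
lemma st_smult: "x \<noteq> 0 \<Longrightarrow> frac_ideal I \<Longrightarrow> st (smult_set x I) = smult_set x (st I)" using so by (simp add: star_operation_def)
lemma st_mono: "frac_ideal I \<Longrightarrow> frac_ideal J \<Longrightarrow> I \<subseteq> J \<Longrightarrow> st I \<subseteq> st J" using so by (simp add: star_operation_def)
lemma st_ext: "frac_ideal I \<Longrightarrow> I \<subseteq> st I" using so by (simp add: star_operation_def)
lemma st_idem: "frac_ideal I \<Longrightarrow> st (st I) = st I" using so by (simp add: star_operation_def)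
lemma st_D: "st DD = DD" using st_principal[of 1] by simp

lemma st_ifrac: assumes "ifrac I" shows "ifrac (st I)"
proof -
  have "st I \<subseteq> st DD" using assms by (intro st_mono) (auto simp: ifrac_def integral_def frac_D)
  then show ?thesis using assms st_frac st_D by (auto simp: ifrac_def integral_def)
qed

lemma st_submod: "frac_ideal I \<Longrightarrow> submod (st I)" using st_frac frac_submod by blast

lemma st_prod_left: assumes "ifrac A" "ifrac B" shows "st (ideal_prod (st A) B) = st (ideal_prod A B)"
proof
  have fA: "frac_ideal A" "frac_ideal B" using assms by (auto simp: ifrac_def)
  have pAB: "ifrac (ideal_prod A B)" using assms ifrac_prod by blast
  have pSB: "ifrac (ideal_prod (st A) B)" using assms ifrac_prod st_ifrac by blast
  show "st (ideal_prod A B) \<subseteq> st (ideal_prod (st A) B)"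
    using pAB pSB fA by (intro st_mono ideal_prod_mono st_ext st_submod) (auto simp: ifrac_def)
  have "ideal_prod (st A) B \<subseteq> st (ideal_prod A B)"
  proof (rule ideal_prod_least)
    show "submod (st (ideal_prod A B))" using pAB by (simp add: ifrac_def st_submod)
    fix a b assume a: "a \<in> st A" and b: "b \<in> B"
    show "a * b \<in> st (ideal_prod A B)"
    proof (cases "b = 0")
      case True then show ?thesis using pAB by (simp add: ifrac_def st_submod submod_0)
    next
      case False
      have "smult_set b A \<subseteq> ideal_prod A B"
        using b by (auto simp: smult_set_def mult.commute intro: ideal_prod_mem)
      then have "st (smult_set b A) \<subseteq> st (ideal_prod A B)"
        using False fA pAB by (intro st_mono frac_smult) (auto simp: ifrac_def)
      moreover have "b * a \<in> st (smult_set b A)" using st_smult[OF False fA(1)] a smult_set_mem by auto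
      ultimately show ?thesis by (auto simp: mult.commute)
    qed
  qed
  then have "st (ideal_prod (st A) B) \<subseteq> st (st (ideal_prod A B))"
    using pAB pSB by (intro st_mono st_frac) (auto simp: ifrac_def)
  then show "st (ideal_prod (st A) B) \<subseteq> st (ideal_prod A B)" using st_idem pAB by (auto simp: ifrac_def)
qed

lemma st_prod_right: assumes "ifrac A" "ifrac B" shows "st (ideal_prod A (st B)) = st (ideal_prod A B)"
  using st_prod_left[OF assms(2,1)] by (simp add: ideal_prod_comm)

lemma st_prod_list: "\<forall>I\<in>set Is. ifrac I \<Longrightarrow> st (ideal_prod_list (map st Is)) = st (ideal_prod_list Is)"
proof (induction Is)
  case Nil then show ?case by simp
next
  case (Cons I Is)
  let ?P = "ideal_prod_list (map st Is)" and ?Q = "ideal_prod_list Is"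
  have iI: "ifrac I" using Cons by simp
  have iP: "ifrac ?P" using Cons st_ifrac by (intro ifrac_prod_list) auto
  have iQ: "ifrac ?Q" using Cons by (intro ifrac_prod_list) auto
  have "st (ideal_prod_list (map st (I # Is))) = st (ideal_prod (st I) ?P)" by (simp add: ideal_prod_list_def)
  also have "\<dots> = st (ideal_prod I ?P)" using st_prod_left iI iP by blast
  also have "\<dots> = st (ideal_prod I (st ?P))" using st_prod_right iI iP by metis
  also have "\<dots> = st (ideal_prod I (st ?Q))" using Cons by simp
  also have "\<dots> = st (ideal_prod I ?Q)" using st_prod_right iI iQ by blast
  finally show ?case by (simp add: ideal_prod_list_def)
qed

lemma principal_ifrac: "x \<in> DD \<Longrightarrow> x \<noteq> 0 \<Longrightarrow> ifrac (smult_set x DD)"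
  using ifrac_smult ifrac_D by blast

lemma st_inter: assumes "frac_ideal A" "frac_ideal B" "st A = A" "st B = B" "frac_ideal (A \<inter> B)"
  shows "st (A \<inter> B) = A \<inter> B"
proof
  show "A \<inter> B \<subseteq> st (A \<inter> B)" using assms st_ext by blast
  have "st (A \<inter> B) \<subseteq> st A" "st (A \<inter> B) \<subseteq> st B" using st_mono[OF assms(5) assms(1)] st_mono[OF assms(5) assms(2)] by auto
  then show "st (A \<inter> B) \<subseteq> A \<inter> B" using assms by auto
qed

lemma max_props: assumes "max_star_ideal st M"
  shows "ifrac M" "st M = M" "1 \<notin> M" "submod M" "M \<subseteq> DD"
  using assms submod_one by (auto simp: max_star_ideal_def star_ideal_def ifrac_def frac_ideal_def integral_def)

lemma max_maximal: assumes "max_star_ideal st M" "ifrac N" "st N = N" "N \<noteq> DD" "M \<subseteq> N" shows "N = M"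
  using assms by (auto simp: max_star_ideal_def star_ideal_def ifrac_def)

lemma max_prime: assumes M: "max_star_ideal st M" shows "primeish M"
  unfolding primeish_def
proof (intro conjI ballI impI)
  show "submod M" "integral M" "1 \<notin> M" using max_props[OF M] by (auto simp: integral_def)
  fix a b assume a: "a \<in> DD" and b: "b \<in> DD" and ab: "a * b \<in> M"
  show "a \<in> M \<or> b \<in> M"
  proof (rule ccontr)
    assume "\<not> (a \<in> M \<or> b \<in> M)"
    then have na: "a \<notin> M" and nb: "b \<notin> M" by auto
    have iM: "ifrac M" and sM: "submod M" using max_props[OF M] by auto
    have a0: "a \<noteq> 0" using na sM submod_0 by blast
    have b0: "b \<noteq> 0" using nb sM submod_0 by blast
    let ?A = "ideal_sum M (smult_set a DD)"
    have iA: "ifrac ?A" using ifrac_sum iM principal_ifrac[OF a a0] by blast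
    have sA: "ifrac (st ?A)" using st_ifrac iA by blast
    have MA: "M \<subseteq> st ?A" using ideal_sum_left[of "smult_set a DD" M] iA st_ext
      submod_smult[OF submod_D] by (auto simp: ifrac_def)
    have "a \<in> ?A" using ideal_sum_right[OF sM, of "smult_set a DD"] smult_set_mem[OF D_1, of a] by auto
    then have aA: "a \<in> st ?A" using iA st_ext by (auto simp: ifrac_def)
    have "st ?A = DD"
    proof (rule ccontr)
      assume "st ?A \<noteq> DD"
      then have "st ?A = M" using max_maximal[OF M sA] st_idem iA MA by (auto simp: ifrac_def)
      then show False using aA na by simp
    qed
    then have "1 \<in> st ?A" by simp
    then have "b * 1 \<in> smult_set b (st ?A)" by (rule smult_set_mem)
    then have "b \<in> st (smult_set b ?A)" using st_smult[OF b0] iA by (simp add: ifrac_def)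
    moreover have "smult_set b ?A \<subseteq> M"
    proof
      fix z assume "z \<in> smult_set b ?A"
      then obtain m e where me: "m \<in> M" "e \<in> DD" "z = b * (m + a * e)"
        by (auto simp: smult_set_def ideal_sum_def)
      have "z = b * m + e * (a * b)" using me by (simp add: algebra_simps)
      then show "z \<in> M" using me ab b sM by (auto intro: submod_add submod_mult)
    qed
    then have "st (smult_set b ?A) \<subseteq> st M"
      using iA iM b0 by (intro st_mono frac_smult) (auto simp: ifrac_def)
    ultimately show False using nb max_props[OF M] by auto
  qed
qed

end



lemma chain_finite_sub:
  assumes "finite S" "C \<noteq> {}" "\<forall>X\<in>C. \<forall>Y\<in>C. X \<subseteq> Y \<or> Y \<subseteq> X" "S \<subseteq> \<Union>C"
  shows "\<exists>X\<in>C. S \<subseteq> X"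
  using assms(1,4)
proof (induction S rule: finite_induct)
  case empty then show ?case using assms(2) by auto
next
  case (insert s S)
  then obtain X where X: "X \<in> C" "S \<subseteq> X" by auto
  obtain Y where Y: "Y \<in> C" "s \<in> Y" using insert by auto
  show ?case using assms(3) X Y by (metis insert_subset subset_trans subsetD)
qed

lemma chain_union_submod:
  fixes C :: "'a::idom fract set set"
  assumes "C \<noteq> {}" "\<forall>X\<in>C. \<forall>Y\<in>C. X \<subseteq> Y \<or> Y \<subseteq> X" "\<forall>X\<in>C. submod X"
  shows "submod (\<Union>C)"
  unfolding submod_def
proof (intro conjI ballI)
  show "0 \<in> \<Union>C" using assms by (auto simp: submod_0)
  fix a b assume "a \<in> \<Union>C" "b \<in> \<Union>C"
  then obtain X Y where "X \<in> C" "Y \<in> C" "a \<in> X" "b \<in> Y" by auto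
  then show "a + b \<in> \<Union>C" using assms(2,3) by (metis UnionI submod_add subsetD)
next
  fix d a :: "'a fract" assume "d \<in> DD" "a \<in> \<Union>C"
  then show "d * a \<in> \<Union>C" using assms(3) by (auto intro: submod_mult)
qed

context
  fixes st :: "'a::idom fract set \<Rightarrow> 'a fract set"
  assumes so: "star_operation st" and fc: "finite_character st"
begin

lemma exists_max: assumes "ifrac I" "st I = I" "I \<noteq> DD"
  shows "\<exists>M. max_star_ideal st M \<and> I \<subseteq> M"
proof -
  let ?F = "{N. ifrac N \<and> st N = N \<and> N \<noteq> DD \<and> I \<subseteq> N}"
  have "\<forall>C\<in>chains ?F. \<exists>U\<in>?F. \<forall>X\<in>C. X \<subseteq> U"
  proof
    fix C assume C: "C \<in> chains ?F"
    then have CF: "C \<subseteq> ?F" and ch: "\<forall>X\<in>C. \<forall>Y\<in>C. X \<subseteq> Y \<or> Y \<subseteq> X"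
      by (auto simp: chains_def chain_subset_def)
    show "\<exists>U\<in>?F. \<forall>X\<in>C. X \<subseteq> U"
    proof (cases "C = {}")
      case True then show ?thesis using assms by auto
    next
      case False
      have "\<forall>X\<in>C. submod X" using CF by (auto simp: ifrac_def frac_submod)
      then have sU: "submod (\<Union>C)" using chain_union_submod[OF False ch] by blast
      have intU: "integral (\<Union>C)" using CF by (auto simp: ifrac_def integral_def)
      obtain X0 where X0: "X0 \<in> C" using False by auto
      have IU: "I \<subseteq> \<Union>C" using X0 CF by auto
      obtain a where a: "a \<in> I" "a \<noteq> 0" using assms(1) frac_nonzero by (auto simp: ifrac_def)
      have fU: "frac_ideal (\<Union>C)" using frac_integral[OF sU intU, of a] a IU by auto
      have "st (\<Union>C) \<subseteq> \<Union>C"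
      proof
        fix z assume "z \<in> st (\<Union>C)"
        then obtain J where J: "frac_ideal J" "fin_gen J" "J \<subseteq> \<Union>C" "z \<in> st J"
          using fc fU unfolding finite_character_def by blast
        obtain S where S: "finite S" "J = gen S" using J(2) by (auto simp: fin_gen_def)
        have "S \<subseteq> \<Union>C" using J(3) S hull_sub gen_hull by blast
        then obtain X where X: "X \<in> C" "S \<subseteq> X" using chain_finite_sub[OF S(1) False ch] by auto
        have XF: "ifrac X" "st X = X" using X CF by auto
        have "submod X" using XF by (simp add: ifrac_def frac_submod)
        then have "J \<subseteq> X" using S X(2) gen_hull hull_least by metis
        then have "st J \<subseteq> st X" using J XF by (intro st_mono[OF so]) (auto simp: ifrac_def)
        then show "z \<in> \<Union>C" using J(4) XF X by auto
      qed
      then have stU: "st (\<Union>C) = \<Union>C" using st_ext[OF so fU] by auto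
      have "\<Union>C \<noteq> DD"
      proof
        assume "\<Union>C = DD"
        then obtain X where X: "X \<in> C" "1 \<in> X" using D_1 by blast
        then have "ifrac X" "X \<noteq> DD" using CF by auto
        then have "submod X" "integral X" by (auto simp: ifrac_def frac_submod)
        then have "X = DD" using submod_one X(2) by blast
        then show False using \<open>X \<noteq> DD\<close> by simp
      qed
      then show ?thesis using stU fU intU IU by (intro bexI[of _ "\<Union>C"]) (auto simp: ifrac_def)
    qed
  qed
  from Zorn_Lemma2[OF this] obtain M where M: "M \<in> ?F" "\<forall>X\<in>?F. M \<subseteq> X \<longrightarrow> X = M" by blast
  have "max_star_ideal st M"
    unfolding max_star_ideal_def star_ideal_def
  proof (intro conjI allI impI)
    show "integral M" "frac_ideal M" "st M = M" "M \<noteq> DD" using M(1) by (auto simp: ifrac_def)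
    fix N assume "integral N \<and> (frac_ideal N \<and> st N = N) \<and> N \<noteq> DD \<and> M \<subseteq> N"
    then have "N \<in> ?F" "M \<subseteq> N" using M(1) by (auto simp: ifrac_def)
    then show "N = M" using M(2) by blast
  qed
  moreover have "I \<subseteq> M" using M(1) by blast
  ultimately show ?thesis by blast
qed

lemma exists_max_st: assumes "ifrac I" "st I \<noteq> DD" shows "\<exists>M. max_star_ideal st M \<and> I \<subseteq> M"
proof -
  have a: "ifrac (st I)" using st_ifrac[OF so] assms(1) by blast
  have b: "st (st I) = st I" using st_idem[OF so] assms(1) by (simp add: ifrac_def)
  obtain M where "max_star_ideal st M" "st I \<subseteq> M" using exists_max[OF a b assms(2)] by blast
  moreover have "I \<subseteq> st I" using st_ext[OF so] assms by (simp add: ifrac_def)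
  ultimately show ?thesis by blast
qed

end

lemma krull:
  assumes M: "primeish M" and N: "primeish N" and x: "x \<in> DD" "x \<noteq> 0"
    and np: "\<not> (\<exists>R. nonzero_prime_ideal R \<and> R \<subseteq> M \<inter> N)"
  shows "\<exists>s t. s \<in> DD \<and> t \<in> DD \<and> s \<notin> M \<and> t \<notin> N \<and> s * t \<in> smult_set x DD"
proof (rule ccontr)
  assume nex: "\<not> ?thesis"
  let ?U = "{s * t | s t. s \<in> DD \<and> t \<in> DD \<and> s \<notin> M \<and> t \<notin> N}"
  let ?F = "{A. submod A \<and> integral A \<and> x \<in> A \<and> A \<inter> ?U = {}}"
  have xD1: "submod (smult_set x DD)" by (simp add: submod_smult submod_D)
  have xD2: "integral (smult_set x DD)" using x by (auto simp: integral_def smult_set_def intro: D_mult)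
  have xD3: "x \<in> smult_set x DD" using smult_set_mem[OF D_1, of x] by simp
  have xD4: "smult_set x DD \<inter> ?U = {}" using nex by blast
  have xD: "smult_set x DD \<in> ?F" using xD1 xD2 xD3 xD4 by blast
  have "\<forall>C\<in>chains ?F. \<exists>U\<in>?F. \<forall>X\<in>C. X \<subseteq> U"
  proof
    fix C assume C: "C \<in> chains ?F"
    then have CF: "C \<subseteq> ?F" and ch: "\<forall>X\<in>C. \<forall>Y\<in>C. X \<subseteq> Y \<or> Y \<subseteq> X"
      by (auto simp: chains_def chain_subset_def)
    show "\<exists>U\<in>?F. \<forall>X\<in>C. X \<subseteq> U"
    proof (cases "C = {}")
      case True then show ?thesis using xD by auto
    next
      case False
      have "submod (\<Union>C)" using chain_union_submod[OF False ch] CF by auto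
      moreover have "integral (\<Union>C)" using CF by (auto simp: integral_def)
      moreover have "x \<in> \<Union>C" using CF False by auto
      moreover have "\<Union>C \<inter> ?U = {}" using CF by blast
      ultimately show ?thesis by (intro bexI[of _ "\<Union>C"]) auto
    qed
  qed
  from Zorn_Lemma2[OF this] obtain P where P: "P \<in> ?F" "\<forall>X\<in>?F. P \<subseteq> X \<longrightarrow> X = P" by blast
  have sP: "submod P" and iP: "integral P" and xP: "x \<in> P" and dP: "P \<inter> ?U = {}" using P by auto
  have M1: "1 \<notin> M" and N1: "1 \<notin> N" using M N by (auto simp: primeish_def)
  have PM: "P \<subseteq> M"
  proof
    fix p assume p: "p \<in> P"
    show "p \<in> M"
    proof (rule ccontr)
      assume "p \<notin> M"
      moreover have "p \<in> DD" using p iP by (auto simp: integral_def)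
      ultimately have "p * 1 \<in> ?U" using N1 D_1 by blast
      then show False using dP p by auto
    qed
  qed
  have PN: "P \<subseteq> N"
  proof
    fix p assume p: "p \<in> P"
    show "p \<in> N"
    proof (rule ccontr)
      assume "p \<notin> N"
      moreover have "p \<in> DD" using p iP by (auto simp: integral_def)
      ultimately have "1 * p \<in> ?U" using M1 D_1 by blast
      then show False using dP p by auto
    qed
  qed
  have ext: "\<exists>u\<in>?U. \<exists>p\<in>P. \<exists>d\<in>DD. u = p + a * d" if a: "a \<in> DD" "a \<notin> P" for a
  proof -
    let ?A = "ideal_sum P (smult_set a DD)"
    have sA: "submod ?A" using sP submod_ideal_sum submod_smult submod_D by blast
    have iA: "integral ?A" using iP a unfolding integral_def
      by (intro ideal_sum_least submod_D) (auto simp: smult_set_def intro: D_mult)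
    have PA: "P \<subseteq> ?A" using ideal_sum_left submod_smult submod_D by blast
    have "a \<in> ?A" using ideal_sum_right[OF sP, of "smult_set a DD"] smult_set_mem[OF D_1, of a] by auto
    then have "?A \<noteq> P" using a by auto
    then have "?A \<notin> ?F" using P(2) PA by auto
    then have "?A \<inter> ?U \<noteq> {}" using sA iA PA xP by auto
    then show ?thesis by (auto simp: ideal_sum_def smult_set_def)
  qed
  have prime: "\<forall>a\<in>DD. \<forall>b\<in>DD. a * b \<in> P \<longrightarrow> a \<in> P \<or> b \<in> P"
  proof (intro ballI impI)
    fix a b assume a: "a \<in> DD" and b: "b \<in> DD" and ab: "a * b \<in> P"
    show "a \<in> P \<or> b \<in> P"
    proof (rule ccontr)
      assume "\<not> (a \<in> P \<or> b \<in> P)"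
      then have naP: "a \<notin> P" "b \<notin> P" by auto
      obtain u1 p1 d1 where
        u1: "u1 \<in> ?U" "p1 \<in> P" "d1 \<in> DD" "u1 = p1 + a * d1" using ext[OF a naP(1)] by blast
      obtain u2 p2 d2 where
        u2: "u2 \<in> ?U" "p2 \<in> P" "d2 \<in> DD" "u2 = p2 + b * d2" using ext[OF b naP(2)] by blast
      obtain s1 t1 where st1: "s1 \<in> DD" "t1 \<in> DD" "s1 \<notin> M" "t1 \<notin> N" "u1 = s1 * t1" using u1 by auto
      obtain s2 t2 where st2: "s2 \<in> DD" "t2 \<in> DD" "s2 \<notin> M" "t2 \<notin> N" "u2 = s2 * t2" using u2 by auto
      have "s1 * s2 \<notin> M" "t1 * t2 \<notin> N" using st1 st2 M N by (auto simp: primeish_def)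
      moreover have "s1 * s2 \<in> DD" "t1 * t2 \<in> DD" using st1 st2 by (auto intro: D_mult)
      ultimately have "(s1 * s2) * (t1 * t2) \<in> ?U" by blast
      moreover have "(s1 * s2) * (t1 * t2) = u1 * u2" using st1 st2 by (simp add: algebra_simps)
      ultimately have U12: "u1 * u2 \<in> ?U" by simp
      have u2D: "u2 \<in> DD" using st2 D_mult by auto
      have "u1 * u2 = u2 * p1 + (a * d1) * p2 + (d1 * d2) * (a * b)" using u1 u2 by (simp add: algebra_simps)
      moreover have "u2 * p1 \<in> P" "(a * d1) * p2 \<in> P" "(d1 * d2) * (a * b) \<in> P"
        using u1 u2 u2D a ab sP by (auto intro!: submod_mult D_mult)
      ultimately have "u1 * u2 \<in> P" using sP by (auto intro: submod_add)
      then show False using U12 dP by blast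
    qed
  qed
  have "1 * 1 \<in> ?U" using M1 N1 D_1 by blast
  then have "1 \<in> ?U" by simp
  then have "1 \<notin> P" using dP by blast
  then have "P \<noteq> DD" by auto
  moreover have "P \<noteq> {0}" using xP x by auto
  ultimately have "nonzero_prime_ideal P" using sP iP prime by (simp add: nonzero_prime_ideal_def)
  then show False using np PM PN by auto
qed



lemma principal_sub: "submod M \<Longrightarrow> x \<in> M \<Longrightarrow> smult_set x DD \<subseteq> M"
  by (auto simp: smult_set_def mult.commute intro: submod_mult)

lemma prodsL_form:
  assumes tD: "\<forall>M\<in>Ms0. \<forall>N\<in>Ms0. M \<noteq> N \<longrightarrow> tf M N \<in> DD" and x: "x \<in> DD" and sub: "set Ms \<subseteq> Ms0"
    and p: "p \<in> prodsL (map (\<lambda>M. insert x (tf M ` (Ms0 - {M}))) Ms)"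
  shows "p \<in> DD \<and> (p \<in> smult_set x DD \<or> (\<forall>M\<in>set Ms. \<exists>N\<in>Ms0. N \<noteq> M \<and> (\<exists>d\<in>DD. p = tf M N * d)))"
  using sub p
proof (induction Ms arbitrary: p)
  case Nil then show ?case by simp
next
  case (Cons M Ms)
  obtain a q where aq: "a \<in> insert x (tf M ` (Ms0 - {M}))" "q \<in> prodsL (map (\<lambda>M. insert x (tf M ` (Ms0 - {M}))) Ms)" "p = a * q"
    using Cons.prems by auto
  have IH: "q \<in> DD \<and> (q \<in> smult_set x DD \<or> (\<forall>M\<in>set Ms. \<exists>N\<in>Ms0. N \<noteq> M \<and> (\<exists>d\<in>DD. q = tf M N * d)))"
    using Cons aq by auto
  have MM: "M \<in> Ms0" using Cons.prems by auto
  show ?case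
  proof (cases "a = x")
    case True
    then have "p \<in> smult_set x DD" using aq IH smult_set_mem by blast
    moreover have "p \<in> DD" using True aq IH x D_mult by blast
    ultimately show ?thesis by blast
  next
    case False
    then obtain N where N: "N \<in> Ms0" "N \<noteq> M" "a = tf M N" using aq by auto
    have aD: "a \<in> DD" using tD N MM by auto
    have pD: "p \<in> DD" using aq(3) D_mult[OF aD] IH by simp
    show ?thesis
    proof (cases "q \<in> smult_set x DD")
      case True
      then obtain e where "e \<in> DD" "q = x * e" by (auto simp: smult_set_def)
      then have "p = x * (a * e)" using aq by (simp add: algebra_simps)
      then have "p \<in> smult_set x DD" using smult_set_mem[OF D_mult[OF aD \<open>e \<in> DD\<close>], of x] by simp
      then show ?thesis using pD by blast
    next
      case False
      then have q2: "\<forall>M\<in>set Ms. \<exists>N\<in>Ms0. N \<noteq> M \<and> (\<exists>d\<in>DD. q = tf M N * d)" using IH by blast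
      have "\<forall>M'\<in>set (M # Ms). \<exists>N\<in>Ms0. N \<noteq> M' \<and> (\<exists>d\<in>DD. p = tf M' N * d)"
      proof
        fix M' assume "M' \<in> set (M # Ms)"
        then consider "M' = M" | "M' \<in> set Ms" by auto
        then show "\<exists>N\<in>Ms0. N \<noteq> M' \<and> (\<exists>d\<in>DD. p = tf M' N * d)"
        proof cases
          case 1
          have "p = tf M N * q" using aq N by simp
          then show ?thesis using 1 N IH by blast
        next
          case 2
          then obtain N' d where "N' \<in> Ms0" "N' \<noteq> M'" "d \<in> DD" "q = tf M' N' * d" using q2 by blast
          moreover have "p = tf M' N' * (a * d)" using calculation aq by (simp add: algebra_simps)
          moreover have "a * d \<in> DD" using D_mult[OF aD] calculation by blast
          ultimately show ?thesis by blast
        qed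
      qed
      then show ?thesis using pD by blast
    qed
  qed
qed

lemma prodsL_nx:
  assumes tf: "\<forall>M\<in>Ms0. \<forall>N\<in>Ms0. M \<noteq> N \<longrightarrow> tf M N \<in> DD \<and> tf M N \<notin> N"
    and P: "primeish M'" "M' \<in> Ms0" "M' \<notin> set Ms" and sub: "set Ms \<subseteq> Ms0"
  shows "\<exists>q\<in>DD. q \<notin> M' \<and> q \<in> prodsL (map (\<lambda>M. insert x (tf M ` (Ms0 - {M}))) Ms)"
  using sub P(3)
proof (induction Ms)
  case Nil
  have "(1::'a fract) \<notin> M'" using P(1) by (simp add: primeish_def)
  then show ?case by (intro bexI[of _ 1]) auto
next
  case (Cons M Ms)
  then obtain q where q: "q \<in> DD" "q \<notin> M'" "q \<in> prodsL (map (\<lambda>M. insert x (tf M ` (Ms0 - {M}))) Ms)" by auto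
  have MM: "M \<in> Ms0" "M \<noteq> M'" using Cons.prems by auto
  have t: "tf M M' \<in> DD" "tf M M' \<notin> M'" using tf MM P(2) by auto
  have "tf M M' \<in> insert x (tf M ` (Ms0 - {M}))" using P(2) MM by auto
  then have "tf M M' * q \<in> prodsL (map (\<lambda>M. insert x (tf M ` (Ms0 - {M}))) (M # Ms))" using q by auto
  moreover have "tf M M' * q \<notin> M'" using t q P(1) by (auto simp: primeish_def)
  moreover have "tf M M' * q \<in> DD" using t q D_mult by blast
  ultimately show ?case by blast
qed

lemma prodsL_x:
  assumes tf: "\<forall>M\<in>Ms0. \<forall>N\<in>Ms0. M \<noteq> N \<longrightarrow> tf M N \<in> DD \<and> tf M N \<notin> N"
    and P: "primeish M'" "M' \<in> set Ms" and sub: "set Ms \<subseteq> Ms0" and dist: "distinct Ms"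
  shows "\<exists>q\<in>DD. q \<notin> M' \<and> x * q \<in> prodsL (map (\<lambda>M. insert x (tf M ` (Ms0 - {M}))) Ms)"
  using sub P(2) dist
proof (induction Ms)
  case Nil then show ?case by simp
next
  case (Cons M Ms)
  have M'0: "M' \<in> Ms0" using Cons.prems by auto
  show ?case
  proof (cases "M = M'")
    case True
    then have "M' \<notin> set Ms" "set Ms \<subseteq> Ms0" using Cons.prems by auto
    then obtain q where q: "q \<in> DD" "q \<notin> M'" "q \<in> prodsL (map (\<lambda>M. insert x (tf M ` (Ms0 - {M}))) Ms)"
      using prodsL_nx[OF tf P(1) M'0] by blast
    then have "x * q \<in> prodsL (map (\<lambda>M. insert x (tf M ` (Ms0 - {M}))) (M # Ms))" by auto
    then show ?thesis using q by blast
  next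
    case False
    then have "M' \<in> set Ms" "set Ms \<subseteq> Ms0" "distinct Ms" using Cons.prems by auto
    then obtain q where q: "q \<in> DD" "q \<notin> M'" "x * q \<in> prodsL (map (\<lambda>M. insert x (tf M ` (Ms0 - {M}))) Ms)"
      using Cons.IH by blast
    have MM: "M \<in> Ms0" using Cons.prems by auto
    have t: "tf M M' \<in> DD" "tf M M' \<notin> M'" using tf MM M'0 False by auto
    have "tf M M' \<in> insert x (tf M ` (Ms0 - {M}))" using M'0 False by auto
    then have "tf M M' * (x * q) \<in> prodsL (map (\<lambda>M. insert x (tf M ` (Ms0 - {M}))) (M # Ms))" using q by auto
    moreover have "tf M M' * (x * q) = x * (tf M M' * q)" by (simp add: algebra_simps)
    ultimately have "x * (tf M M' * q) \<in> prodsL (map (\<lambda>M. insert x (tf M ` (Ms0 - {M}))) (M # Ms))" by simp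
    moreover have "tf M M' * q \<notin> M'" using t q P(1) by (auto simp: primeish_def)
    moreover have "tf M M' * q \<in> DD" using t q D_mult by blast
    ultimately show ?thesis by blast
  qed
qed

lemma prodsL_pow: "x ^ length Ms \<in> prodsL (map (\<lambda>M. insert x (H M)) Ms)"
  by (induction Ms) auto

lemma subsingleton_finite: "\<forall>a\<in>A. \<forall>b\<in>A. a = b \<Longrightarrow> finite A"
proof (cases "A = {}")
  case False
  then obtain a where "a \<in> A" by auto
  moreover assume "\<forall>a\<in>A. \<forall>b\<in>A. a = b"
  ultimately have "A \<subseteq> {a}" by auto
  then show ?thesis using finite_subset by blast
qed simp



context
  fixes st :: "'a::idom fract set \<Rightarrow> 'a fract set"
  assumes so: "star_operation st" and fc: "finite_character st"
begin

lemma homog_ifrac: "star_homog st I \<Longrightarrow> ifrac I"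
  by (simp add: star_homog_def ifrac_def star_ideal_def)

lemma aux_ext:
  assumes T: "finite T" "frac_ideal (gen T)" and I: "I = st (gen T)" and P: "max_star_ideal st P" "I \<subseteq> P"
    and S: "finite S'" "S' \<subseteq> P"
  shows "integral (st (gen (T \<union> S'))) \<and> star_ideal st (st (gen (T \<union> S'))) \<and> finite_type st (st (gen (T \<union> S')))
     \<and> st (gen (T \<union> S')) \<noteq> DD \<and> I \<subseteq> st (gen (T \<union> S')) \<and> S' \<subseteq> st (gen (T \<union> S')) \<and> st (gen (T \<union> S')) \<subseteq> P"
proof -
  let ?G = "gen (T \<union> S')"
  have fin: "finite (T \<union> S')" using T S by simp
  have Gh: "?G = hull (T \<union> S')" using gen_hull[OF fin] .
  have Th: "gen T = hull T" using gen_hull[OF T(1)] .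
  have sP: "submod P" "ifrac P" "st P = P" "1 \<notin> P" "P \<subseteq> DD" using max_props[OF so P(1)] by auto
  have "T \<subseteq> gen T" using Th hull_sub by auto
  moreover have "gen T \<subseteq> I" using I st_ext[OF so T(2)] by simp
  ultimately have TP: "T \<subseteq> P" using P(2) by blast
  have GP: "?G \<subseteq> P" using Gh hull_least[OF sP(1)] TP S(2) by auto
  have TG: "gen T \<subseteq> ?G" using Gh Th hull_mono[of T "T \<union> S'"] by auto
  obtain a where a: "a \<in> gen T" "a \<noteq> 0" using frac_nonzero[OF T(2)] by auto
  have iG: "ifrac ?G" unfolding ifrac_def
    using frac_integral[of ?G a] submod_hull[of "T \<union> S'"] Gh GP sP(5) a TG by (auto simp: integral_def)
  have fG: "frac_ideal ?G" using iG by (simp add: ifrac_def)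
  have stG: "ifrac (st ?G)" using st_ifrac[OF so iG] .
  have GPs: "st ?G \<subseteq> P" using st_mono[OF so fG] sP GP by (metis ifrac_def)
  have "integral (st ?G)" using stG by (simp add: ifrac_def)
  moreover have "star_ideal st (st ?G)" using stG st_idem[OF so fG] by (simp add: star_ideal_def ifrac_def)
  moreover have "finite_type st (st ?G)" unfolding finite_type_def fin_gen_def using fG fin by blast
  moreover have "st ?G \<noteq> DD" using GPs sP(4) D_1 by blast
  moreover have "I \<subseteq> st ?G" using I st_mono[OF so T(2) fG TG] by simp
  moreover have "S' \<subseteq> st ?G" using Gh hull_sub[of "T \<union> S'"] st_ext[OF so fG] by blast
  ultimately show ?thesis using GPs by blast
qed

lemma homog_unique:
  assumes H: "star_homog st I" and P: "max_star_ideal st P" "I \<subseteq> P" and Q: "max_star_ideal st Q" "I \<subseteq> Q"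
  shows "P = Q"
proof (rule ccontr)
  assume PQ: "P \<noteq> Q"
  have sP: "submod P" "ifrac P" "st P = P" "1 \<notin> P" "P \<subseteq> DD" using max_props[OF so P(1)] by auto
  have sQ: "submod Q" "ifrac Q" "st Q = Q" "1 \<notin> Q" "Q \<subseteq> DD" using max_props[OF so Q(1)] by auto
  let ?A = "ideal_sum P Q"
  have iA: "ifrac ?A" using ifrac_sum sP sQ by blast
  have fA: "frac_ideal ?A" using iA by (simp add: ifrac_def)
  have PA: "P \<subseteq> st ?A" using ideal_sum_left[OF sQ(1)] st_ext[OF so fA] by blast
  have QA: "Q \<subseteq> st ?A" using ideal_sum_right[OF sP(1)] st_ext[OF so fA] by blast
  have NA: "st ?A = DD"
  proof (rule ccontr)
    assume ne: "st ?A \<noteq> DD"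
    have "st ?A = P" using max_maximal[OF so P(1) st_ifrac[OF so iA] st_idem[OF so fA] ne PA] .
    then have "Q \<subseteq> P" using QA by simp
    moreover have "P \<noteq> DD" using sP(4) D_1 by blast
    ultimately have "P = Q" using max_maximal[OF so Q(1) sP(2) sP(3)] by simp
    then show False using PQ by simp
  qed
  then have "1 \<in> st ?A" by simp
  then obtain J where J: "frac_ideal J" "fin_gen J" "J \<subseteq> ?A" "1 \<in> st J"
    using fc fA unfolding finite_character_def by blast
  obtain S where S: "finite S" "J = gen S" using J(2) by (auto simp: fin_gen_def)
  have SA: "S \<subseteq> ?A" using J(3) S hull_sub gen_hull by blast
  have "\<forall>s\<in>S. \<exists>pq. fst pq \<in> P \<and> snd pq \<in> Q \<and> s = fst pq + snd pq"
  proof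
    fix s assume "s \<in> S"
    then obtain a b where "a \<in> P" "b \<in> Q" "s = a + b" using SA unfolding ideal_sum_def by blast
    then show "\<exists>pq. fst pq \<in> P \<and> snd pq \<in> Q \<and> s = fst pq + snd pq" by (intro exI[of _ "(a,b)"]) simp
  qed
  then obtain f where f: "\<forall>s\<in>S. fst (f s) \<in> P \<and> snd (f s) \<in> Q \<and> s = fst (f s) + snd (f s)"
    by (metis bchoice)
  obtain J0 where J0: "frac_ideal J0" "fin_gen J0" "I = st J0" using H by (auto simp: star_homog_def finite_type_def)
  obtain T where T: "finite T" "J0 = gen T" using J0(2) by (auto simp: fin_gen_def)
  let ?J1 = "st (gen (T \<union> (fst \<circ> f) ` S))" and ?L1 = "st (gen (T \<union> (snd \<circ> f) ` S))"
  have PS: "(fst \<circ> f) ` S \<subseteq> P" and QS: "(snd \<circ> f) ` S \<subseteq> Q" using f by auto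
  have J1: "integral ?J1 \<and> star_ideal st ?J1 \<and> finite_type st ?J1 \<and> ?J1 \<noteq> DD \<and> I \<subseteq> ?J1 \<and> (fst \<circ> f) ` S \<subseteq> ?J1 \<and> ?J1 \<subseteq> P"
    using aux_ext[OF T(1) _ _ P] J0 T S(1) PS by blast
  have L1: "integral ?L1 \<and> star_ideal st ?L1 \<and> finite_type st ?L1 \<and> ?L1 \<noteq> DD \<and> I \<subseteq> ?L1 \<and> (snd \<circ> f) ` S \<subseteq> ?L1 \<and> ?L1 \<subseteq> Q"
    using aux_ext[OF T(1) _ _ Q] J0 T S(1) QS by blast
  have Hall: "\<forall>J L. integral J \<and> star_ideal st J \<and> finite_type st J \<and> J \<noteq> DD \<and> I \<subseteq> J \<and>
            integral L \<and> star_ideal st L \<and> finite_type st L \<and> L \<noteq> DD \<and> I \<subseteq> L \<longrightarrow>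
            st (ideal_sum J L) \<noteq> DD" using H unfolding star_homog_def by blast
  have c: "integral ?J1 \<and> star_ideal st ?J1 \<and> finite_type st ?J1 \<and> ?J1 \<noteq> DD \<and> I \<subseteq> ?J1 \<and>
            integral ?L1 \<and> star_ideal st ?L1 \<and> finite_type st ?L1 \<and> ?L1 \<noteq> DD \<and> I \<subseteq> ?L1"
    by (intro conjI; insert J1 L1; elim conjE; assumption)
  have ne: "st (ideal_sum ?J1 ?L1) \<noteq> DD" using Hall[rule_format, OF c] .
  have iJ1: "ifrac ?J1" "ifrac ?L1" unfolding ifrac_def star_ideal_def
    by (insert J1 L1; unfold star_ideal_def; elim conjE; intro conjI; assumption)+
  have sJL: "submod (ideal_sum ?J1 ?L1)" using iJ1 by (simp add: ifrac_def frac_submod submod_ideal_sum)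
  have "S \<subseteq> ideal_sum ?J1 ?L1"
  proof
    fix s assume s: "s \<in> S"
    then have "fst (f s) \<in> ?J1" "snd (f s) \<in> ?L1" "s = fst (f s) + snd (f s)" using J1 L1 f by auto
    then show "s \<in> ideal_sum ?J1 ?L1" unfolding ideal_sum_def by blast
  qed
  then have "J \<subseteq> ideal_sum ?J1 ?L1" using S gen_hull hull_least[OF sJL] by metis
  moreover have iS: "ifrac (ideal_sum ?J1 ?L1)" using ifrac_sum iJ1 by blast
  ultimately have "st J \<subseteq> st (ideal_sum ?J1 ?L1)" using J(1) st_mono[OF so] by (simp add: ifrac_def)
  then have "1 \<in> st (ideal_sum ?J1 ?L1)" using J(4) by blast
  moreover have "ifrac (st (ideal_sum ?J1 ?L1))" using st_ifrac[OF so iS] .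
  ultimately have "st (ideal_sum ?J1 ?L1) = DD"
    using submod_one[of "st (ideal_sum ?J1 ?L1)"] frac_submod unfolding ifrac_def by blast
  then show False using ne by simp
qed

lemma SH_fsc: assumes SH: "star_SH st" shows "finite_star_character st"
  unfolding finite_star_character_def
proof (intro allI impI)
  fix x :: 'a assume x: "x \<noteq> 0" "\<not> x dvd 1"
  obtain Is where Is: "\<forall>I\<in>set Is. star_homog st I" "smult_set (emb x) DD = st (ideal_prod_list Is)"
    using SH x unfolding star_SH_def by blast
  have iI: "\<forall>I\<in>set Is. ifrac I" using Is homog_ifrac by blast
  have iP: "ifrac (ideal_prod_list Is)" using ifrac_prod_list[OF iI] .
  have Psub: "ideal_prod_list Is \<subseteq> smult_set (emb x) DD" using Is(2) st_ext[OF so] iP by (simp add: ifrac_def)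
  have "{M. max_star_ideal st M \<and> emb x \<in> M} \<subseteq> (\<Union>I\<in>set Is. {M. max_star_ideal st M \<and> I \<subseteq> M})"
  proof
    fix M assume M: "M \<in> {M. max_star_ideal st M \<and> emb x \<in> M}"
    then have Mm: "max_star_ideal st M" "emb x \<in> M" by auto
    have "smult_set (emb x) DD \<subseteq> M" using principal_sub max_props[OF so Mm(1)] Mm(2) by blast
    then have "ideal_prod_list Is \<subseteq> M" using Psub by blast
    then obtain I where "I \<in> set Is" "I \<subseteq> M" using primeish_prod_list[OF max_prime[OF so Mm(1)] iI] by blast
    then show "M \<in> (\<Union>I\<in>set Is. {M. max_star_ideal st M \<and> I \<subseteq> M})" using Mm by blast
  qed
  moreover have "finite (\<Union>I\<in>set Is. {M. max_star_ideal st M \<and> I \<subseteq> M})"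
  proof (rule finite_UN_I)
    show "finite (set Is)" by simp
    fix I assume "I \<in> set Is"
    then have "star_homog st I" using Is by blast
    then show "finite {M. max_star_ideal st M \<and> I \<subseteq> M}"
      using homog_unique by (intro subsingleton_finite) blast
  qed
  ultimately show "finite {M. max_star_ideal st M \<and> emb x \<in> M}" using finite_subset by blast
qed

lemma SH_np: assumes SH: "star_SH st" and P: "max_star_ideal st P" and Q: "max_star_ideal st Q" and PQ: "P \<noteq> Q"
  shows "\<not> (\<exists>R. nonzero_prime_ideal R \<and> R \<subseteq> P \<inter> Q)"
proof
  assume "\<exists>R. nonzero_prime_ideal R \<and> R \<subseteq> P \<inter> Q"
  then obtain R where R: "nonzero_prime_ideal R" "R \<subseteq> P \<inter> Q" by blast
  have sR: "submod R" "integral R" "R \<noteq> {0}" "R \<noteq> DD" using R by (auto simp: nonzero_prime_ideal_def)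
  have pR: "primeish R" using R sR submod_one unfolding primeish_def nonzero_prime_ideal_def by blast
  obtain r where r: "r \<in> R" "r \<noteq> 0" using sR(1,3) submod_0 by blast
  then obtain x0 where x0: "r = emb x0" using sR(2) by (auto simp: integral_def Dset_def)
  have x00: "x0 \<noteq> 0" using r x0 by auto
  have nu: "\<not> x0 dvd 1"
  proof
    assume "x0 dvd 1"
    then obtain k where "1 = x0 * k" by (auto elim: dvdE)
    then have "emb k * r = 1" using x0 by (simp add: emb_mult mult.commute)
    then have "1 \<in> R" using submod_mult[OF sR(1) D_emb r(1), of k] by simp
    then show False using submod_one sR by blast
  qed
  obtain Is where Is: "\<forall>I\<in>set Is. star_homog st I" "smult_set (emb x0) DD = st (ideal_prod_list Is)"
    using SH x00 nu unfolding star_SH_def by blast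
  have iI: "\<forall>I\<in>set Is. ifrac I" using Is homog_ifrac by blast
  have iP: "ifrac (ideal_prod_list Is)" using ifrac_prod_list[OF iI] .
  have Psub: "ideal_prod_list Is \<subseteq> smult_set (emb x0) DD" using Is(2) st_ext[OF so] iP by (simp add: ifrac_def)
  have "smult_set (emb x0) DD \<subseteq> R" using principal_sub sR(1) r(1) x0 by blast
  then obtain I where I: "I \<in> set Is" "I \<subseteq> R" using primeish_prod_list[OF pR iI] Psub by blast
  then have "I \<subseteq> P" "I \<subseteq> Q" using R(2) by auto
  then show False using homog_unique Is(1) I(1) P Q PQ by blast
qed

lemma colon_lemma:
  assumes x: "x \<in> DD" "x \<noteq> 0" and p: "p \<in> DD" "p \<noteq> 0"
    and H: "\<forall>M'. max_star_ideal st M' \<and> x \<in> M' \<longrightarrow> (\<exists>s\<in>DD. s \<notin> M' \<and> s * p \<in> smult_set x DD)"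
  shows "p \<in> smult_set x DD"
proof -
  let ?z = "x / p"
  have z0: "?z \<noteq> 0" using x p by simp
  let ?C = "DD \<inter> smult_set ?z DD"
  have fz: "frac_ideal (smult_set ?z DD)" using frac_smult[OF frac_D z0] .
  have xC: "x \<in> ?C" using x p smult_set_mem[OF p(1), of ?z] by simp
  have sC: "submod ?C" using submod_inter[OF submod_D submod_smult[OF submod_D]] .
  have fC: "frac_ideal ?C" using frac_integral[OF sC _ xC x(2)] by (simp add: integral_def)
  have iC: "ifrac ?C" using fC by (simp add: ifrac_def integral_def)
  have stC: "st ?C = ?C" using st_inter[OF so frac_D fz st_D[OF so] st_principal[OF so z0] fC] .
  have "?C = DD"
  proof (rule ccontr)
    assume "?C \<noteq> DD"
    then obtain M' where M': "max_star_ideal st M'" "?C \<subseteq> M'" using exists_max[OF so fc iC stC] by blast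
    then have "x \<in> M'" using xC by blast
    then obtain s where s: "s \<in> DD" "s \<notin> M'" "s * p \<in> smult_set x DD" using H M'(1) by blast
    then obtain e where e: "e \<in> DD" "s * p = x * e" by (auto simp: smult_set_def)
    have "s = ?z * e" using e p by (simp add: field_simps)
    then have "s \<in> smult_set ?z DD" using smult_set_mem[OF e(1), of ?z] by simp
    then have "s \<in> ?C" using s by blast
    then show False using s M' by blast
  qed
  then have "1 \<in> smult_set ?z DD" by (metis D_1 IntE)
  then obtain e where e: "e \<in> DD" "1 = ?z * e" by (auto simp: smult_set_def)
  then have "p = x * e" using p by (simp add: field_simps)
  then show ?thesis using smult_set_mem[OF e(1)] by simp
qed

lemma x_in_st:
  assumes x: "x \<in> DD" "x \<noteq> 0" and iP: "ifrac P" and Psub: "P \<subseteq> smult_set x DD"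
    and pw: "x ^ k \<in> P"
    and H: "\<forall>M'. max_star_ideal st M' \<and> x \<in> M' \<longrightarrow> (\<exists>q\<in>DD. q \<notin> M' \<and> x * q \<in> P)"
  shows "x \<in> st P"
proof -
  let ?y = "1 / x"
  have y0: "?y \<noteq> 0" using x by simp
  have fP: "frac_ideal P" using iP by (simp add: ifrac_def)
  have fyP: "frac_ideal (smult_set ?y P)" using frac_smult[OF fP y0] .
  let ?B = "smult_set ?y (st P)"
  have BB: "st (smult_set ?y P) = ?B" using st_smult[OF so y0 fP] .
  have fx: "frac_ideal (smult_set x DD)" using frac_smult[OF frac_D x(2)] .
  have "st P \<subseteq> st (smult_set x DD)" using st_mono[OF so fP fx Psub] .
  then have stPx: "st P \<subseteq> smult_set x DD" using st_principal[OF so x(2)] by simp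
  have "?B \<subseteq> smult_set ?y (smult_set x DD)" using smult_set_mono[OF stPx] .
  also have "\<dots> = DD" using x by (simp add: smult_set_comp)
  finally have Bint: "?B \<subseteq> DD" .
  have fB: "frac_ideal ?B" using frac_smult[OF st_frac[OF so fP] y0] .
  have iB: "ifrac ?B" using fB Bint by (simp add: ifrac_def integral_def)
  have stB: "st ?B = ?B" using BB st_idem[OF so fyP] by simp
  have "?B = DD"
  proof (rule ccontr)
    assume "?B \<noteq> DD"
    then obtain M' where M': "max_star_ideal st M'" "?B \<subseteq> M'" using exists_max[OF so fc iB stB] by blast
    have PB: "smult_set ?y P \<subseteq> ?B" using st_ext[OF so fyP] BB by simp
    have "?y * x ^ k \<in> smult_set ?y P" using smult_set_mem[OF pw] .
    then have "?y * x ^ k \<in> M'" using PB M' by blast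
    moreover have "?y * x ^ k = (if k = 0 then ?y else x ^ (k - 1))" using x
      by (cases k) (auto simp: field_simps)
    ultimately have "x \<in> M'"
    proof (cases k)
      case 0
      then have "?y \<in> M'" using \<open>?y * x ^ k \<in> M'\<close> by simp
      then have "x * ?y \<in> M'" using submod_mult[OF max_props(4)[OF so M'(1)] x(1)] by blast
      then have "1 \<in> M'" using x by simp
      then show ?thesis using max_props[OF so M'(1)] by blast
    next
      case (Suc j)
      then have "x ^ j \<in> M'" using \<open>?y * x ^ k \<in> M'\<close> x by (simp add: field_simps)
      then show ?thesis using primeish_pow[OF max_prime[OF so M'(1)] x(1)] by blast
    qed
    then obtain q where q: "q \<in> DD" "q \<notin> M'" "x * q \<in> P" using H M'(1) by blast
    have "?y * (x * q) \<in> smult_set ?y P" using smult_set_mem[OF q(3)] .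
    then have "q \<in> smult_set ?y P" using x by (simp add: field_simps)
    then show False using PB M' q by blast
  qed
  then have "1 \<in> ?B" by simp
  then obtain z where z: "z \<in> st P" "1 = ?y * z" by (auto simp: smult_set_def)
  then have "z = x" using x by (simp add: field_simps)
  then show ?thesis using z by simp
qed

end



lemma main21:
  fixes st :: "'a::idom fract set \<Rightarrow> 'a fract set"
  assumes so: "star_operation st" and fc: "finite_character st" and fsc: "finite_star_character st"
    and np: "\<forall>P Q. max_star_ideal st P \<and> max_star_ideal st Q \<and> P \<noteq> Q \<longrightarrow>
         \<not> (\<exists>R. nonzero_prime_ideal R \<and> R \<subseteq> P \<inter> Q)"
    and x0: "x0 \<noteq> 0" "\<not> x0 dvd 1"
  shows "\<exists>Is. (\<forall>I\<in>set Is. star_homog st I) \<and> smult_set (emb x0) DD = st (ideal_prod_list Is)"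
proof -
  define x where "x = emb x0"
  have xD: "x \<in> DD" "x \<noteq> 0" using x0 by (auto simp: x_def emb_eq0)
  define Mset where "Mset = {M. max_star_ideal st M \<and> x \<in> M}"
  have finM: "finite Mset" using fsc x0 unfolding finite_star_character_def Mset_def x_def by blast
  define xDD where "xDD = smult_set x DD"
  have sxDD: "submod xDD" unfolding xDD_def by (simp add: submod_smult submod_D)
  have Mp: "primeish M" "submod M" "x \<in> M" "xDD \<subseteq> M" "max_star_ideal st M" if "M \<in> Mset" for M
  proof -
    show mm: "max_star_ideal st M" "x \<in> M" using that by (auto simp: Mset_def)
    show "primeish M" using max_prime[OF so mm(1)] .
    show sm: "submod M" using max_props[OF so mm(1)] by blast
    show "xDD \<subseteq> M" unfolding xDD_def using principal_sub[OF sm mm(2)] .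
  qed
  define Qp where "Qp = (\<lambda>M N s t. s \<in> DD \<and> t \<in> DD \<and> s \<notin> M \<and> t \<notin> N \<and> s * t \<in> xDD)"
  have pairs: "\<exists>s t. Qp M N s t" if "M \<in> Mset" "N \<in> Mset" "M \<noteq> N" for M N
  proof -
    have "\<not> (\<exists>R. nonzero_prime_ideal R \<and> R \<subseteq> M \<inter> N)" using np Mp(5)[OF that(1)] Mp(5)[OF that(2)] that(3) by blast
    then show ?thesis using krull[OF Mp(1)[OF that(1)] Mp(1)[OF that(2)] xD] unfolding Qp_def xDD_def by blast
  qed
  define sf where "sf M N = (SOME s. \<exists>t. Qp M N s t)" for M N
  define tf where "tf M N = (SOME t. Qp M N (sf M N) t)" for M N
  have Qf: "Qp M N (sf M N) (tf M N)" if "M \<in> Mset" "N \<in> Mset" "M \<noteq> N" for M N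
  proof -
    have "\<exists>t. Qp M N (sf M N) t" unfolding sf_def using someI_ex[OF pairs[OF that]] .
    then show ?thesis unfolding tf_def by (rule someI_ex)
  qed
  have tfacts: "tf M N \<in> DD" "tf M N \<notin> N" "tf M N \<in> M" "sf M N \<in> DD" "sf M N \<notin> M"
    "sf M N * tf M N \<in> xDD" if "M \<in> Mset" "N \<in> Mset" "M \<noteq> N" for M N
  proof -
    have q: "Qp M N (sf M N) (tf M N)" using Qf[OF that] .
    then show "tf M N \<in> DD" "tf M N \<notin> N" "sf M N \<in> DD" "sf M N \<notin> M" "sf M N * tf M N \<in> xDD"
      unfolding Qp_def by auto
    then show "tf M N \<in> M" using Mp(1,4)[OF that(1)] unfolding primeish_def by blast
  qed
  have tfall: "\<forall>M\<in>Mset. \<forall>N\<in>Mset. M \<noteq> N \<longrightarrow> tf M N \<in> DD \<and> tf M N \<notin> N" using tfacts by blast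
  have tfD: "\<forall>M\<in>Mset. \<forall>N\<in>Mset. M \<noteq> N \<longrightarrow> tf M N \<in> DD" using tfacts by blast
  define G where "G M = insert x (tf M ` (Mset - {M}))" for M
  define IM where "IM M = gen (G M)" for M
  have finG: "finite (G M)" for M using finM by (simp add: G_def)
  have IMh: "IM M = hull (G M)" for M using gen_hull[OF finG] by (simp add: IM_def)
  have IMsub: "IM M \<subseteq> M" if "M \<in> Mset" for M
  proof -
    have "G M \<subseteq> M" using tfacts(3)[OF that] Mp(3)[OF that] by (auto simp: G_def)
    then show ?thesis using IMh hull_least[OF Mp(2)[OF that]] by simp
  qed
  have xIM: "x \<in> IM M" for M using IMh hull_sub[of "G M"] by (auto simp: G_def)
  have iIM: "ifrac (IM M)" if "M \<in> Mset" for M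
  proof -
    have "integral (IM M)" using IMsub[OF that] max_props(5)[OF so Mp(5)[OF that]] by (auto simp: integral_def)
    moreover have "submod (IM M)" using IMh submod_hull by simp
    ultimately show ?thesis using frac_integral[OF _ _ xIM xD(2)] by (simp add: ifrac_def)
  qed
  have fIM: "frac_ideal (IM M)" if "M \<in> Mset" for M using iIM[OF that] by (simp add: ifrac_def)
  have Jsub: "J \<subseteq> M" if M: "M \<in> Mset" and J: "integral J" "star_ideal st J" "J \<noteq> DD" "st (IM M) \<subseteq> J" for M J
  proof -
    have iJ: "ifrac J" "st J = J" using J by (auto simp: ifrac_def star_ideal_def)
    obtain M' where M': "max_star_ideal st M'" "J \<subseteq> M'" using exists_max[OF so fc iJ J(3)] by blast
    have "x \<in> st (IM M)" using xIM st_ext[OF so fIM[OF M]] by blast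
    then have xM': "x \<in> M'" using J(4) M'(2) by blast
    then have M'M: "M' \<in> Mset" using M' by (simp add: Mset_def)
    have "M' = M"
    proof (rule ccontr)
      assume ne: "M' \<noteq> M"
      have "tf M M' \<in> G M" using M'M ne by (auto simp: G_def)
      then have "tf M M' \<in> IM M" using IMh hull_sub by blast
      then have "tf M M' \<in> M'" using st_ext[OF so fIM[OF M]] J(4) M'(2) by blast
      then show False using tfacts(2)[OF M M'M] ne by blast
    qed
    then show ?thesis using M' by simp
  qed
  have homog: "star_homog st (st (IM M))" if M: "M \<in> Mset" for M
  proof -
    have sI: "ifrac (st (IM M))" using st_ifrac[OF so iIM[OF M]] .
    have Mpr: "ifrac M" "st M = M" "1 \<notin> M" "submod M" using max_props[OF so Mp(5)[OF M]] by auto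
    have stIM: "st (IM M) \<subseteq> M" using st_mono[OF so fIM[OF M]] IMsub[OF M] Mpr by (metis ifrac_def)
    have "integral (st (IM M))" using sI by (simp add: ifrac_def)
    moreover have "star_ideal st (st (IM M))" using sI st_idem[OF so fIM[OF M]] by (simp add: ifrac_def star_ideal_def)
    moreover have "finite_type st (st (IM M))"
    proof -
      have "fin_gen (IM M)" unfolding fin_gen_def IM_def using finG by blast
      then show ?thesis unfolding finite_type_def using fIM[OF M] by blast
    qed
    moreover have "st (IM M) \<noteq> DD" using stIM Mpr(3) D_1 by blast
    moreover have "st (ideal_sum J L) \<noteq> DD" if JL: "integral J \<and> star_ideal st J \<and> finite_type st J \<and> J \<noteq> DD \<and> st (IM M) \<subseteq> J \<and>
            integral L \<and> star_ideal st L \<and> finite_type st L \<and> L \<noteq> DD \<and> st (IM M) \<subseteq> L" for J L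
    proof -
      have JM: "J \<subseteq> M" using Jsub[OF M] JL by blast
      have LM: "L \<subseteq> M" using Jsub[OF M] JL by blast
      have iJL: "ifrac J" "ifrac L" using JL by (auto simp: ifrac_def star_ideal_def)
      have iS: "ifrac (ideal_sum J L)" using ifrac_sum[OF iJL] .
      have "ideal_sum J L \<subseteq> M" using ideal_sum_least[OF Mpr(4) JM LM] .
      then have "st (ideal_sum J L) \<subseteq> M" using st_mono[OF so] iS Mpr by (metis ifrac_def)
      then show ?thesis using Mpr(3) D_1 by blast
    qed
    ultimately show ?thesis unfolding star_homog_def by blast
  qed
  obtain Ms where Ms: "set Ms = Mset" "distinct Ms" using finite_distinct_list[OF finM] by blast
  define Is where "Is = map (\<lambda>M. st (IM M)) Ms"
  have hIs: "\<forall>I\<in>set Is. star_homog st I" using homog Ms by (auto simp: Is_def)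
  have iIs: "\<forall>I\<in>set (map IM Ms). ifrac I" using iIM Ms by auto
  have "st (ideal_prod_list Is) = st (ideal_prod_list (map st (map IM Ms)))" by (simp add: Is_def comp_def)
  also have "\<dots> = st (ideal_prod_list (map IM Ms))" using st_prod_list[OF so iIs] .
  finally have e1: "st (ideal_prod_list Is) = st (ideal_prod_list (map IM Ms))" .
  define Pi where "Pi = hull (prodsL (map G Ms))"
  have "map IM Ms = map (\<lambda>M. hull (G M)) Ms" using IMh by simp
  then have PiEq: "ideal_prod_list (map IM Ms) = Pi" using ideal_prod_list_hull Pi_def by metis
  have iPi: "ifrac Pi" using ifrac_prod_list[OF iIs] PiEq by simp
  have GG: "G = (\<lambda>M. insert x (tf M ` (Mset - {M})))" using G_def by blast
  have prodsub: "prodsL (map G Ms) \<subseteq> xDD"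
  proof
    fix p assume p: "p \<in> prodsL (map G Ms)"
    have pf: "p \<in> DD \<and> (p \<in> smult_set x DD \<or> (\<forall>M\<in>set Ms. \<exists>N\<in>Mset. N \<noteq> M \<and> (\<exists>d\<in>DD. p = tf M N * d)))"
      using prodsL_form[OF tfD xD(1), of Ms p] p Ms(1) GG by simp
    show "p \<in> xDD"
    proof (cases "p \<in> smult_set x DD")
      case True then show ?thesis by (simp add: xDD_def)
    next
      case False
      then have pf2: "\<forall>M\<in>set Ms. \<exists>N\<in>Mset. N \<noteq> M \<and> (\<exists>d\<in>DD. p = tf M N * d)" using pf by blast
      show ?thesis
      proof (cases "p = 0")
        case True then show ?thesis using sxDD submod_0 by blast
      next
        case False
        have "\<forall>M'. max_star_ideal st M' \<and> x \<in> M' \<longrightarrow> (\<exists>s\<in>DD. s \<notin> M' \<and> s * p \<in> smult_set x DD)"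
        proof (intro allI impI)
          fix M' assume "max_star_ideal st M' \<and> x \<in> M'"
          then have M'M: "M' \<in> Mset" by (simp add: Mset_def)
          then obtain N d where Nd: "N \<in> Mset" "N \<noteq> M'" "d \<in> DD" "p = tf M' N * d" using pf2 Ms(1) by blast
          have "d * (sf M' N * tf M' N) \<in> xDD" using submod_mult[OF sxDD Nd(3) tfacts(6)[OF M'M Nd(1)]] Nd(2) by simp
          moreover have "sf M' N * p = d * (sf M' N * tf M' N)" using Nd(4) by (simp add: algebra_simps)
          ultimately have "sf M' N * p \<in> xDD" by metis
          then have "sf M' N * p \<in> smult_set x DD" by (simp add: xDD_def)
          moreover have "sf M' N \<in> DD" "sf M' N \<notin> M'" using tfacts(4,5)[OF M'M Nd(1)] Nd(2) by auto
          ultimately show "\<exists>s\<in>DD. s \<notin> M' \<and> s * p \<in> smult_set x DD" by blast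
        qed
        then show ?thesis using colon_lemma[OF so fc xD _ False] pf by (simp add: xDD_def)
      qed
    qed
  qed
  have PiSub: "Pi \<subseteq> xDD" unfolding Pi_def using hull_least[OF sxDD prodsub] .
  have "x ^ length Ms \<in> prodsL (map G Ms)" using prodsL_pow[where x=x and H="\<lambda>M. tf M ` (Mset - {M})" and Ms=Ms] GG by simp
  then have pw: "x ^ length Ms \<in> Pi" using hull_sub unfolding Pi_def by blast
  have Hq: "\<forall>M'. max_star_ideal st M' \<and> x \<in> M' \<longrightarrow> (\<exists>q\<in>DD. q \<notin> M' \<and> x * q \<in> Pi)"
  proof (intro allI impI)
    fix M' assume a: "max_star_ideal st M' \<and> x \<in> M'"
    then have M'M: "M' \<in> set Ms" using Ms(1) by (simp add: Mset_def)
    obtain q where q: "q \<in> DD" "q \<notin> M'" "x * q \<in> prodsL (map (\<lambda>M. insert x (tf M ` (Mset - {M}))) Ms)"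
      using prodsL_x[OF tfall max_prime[OF so conjunct1[OF a]] M'M Ms(1)[THEN equalityD1] Ms(2)] by blast
    have "x * q \<in> prodsL (map G Ms)" using q(3) GG by simp
    then have "x * q \<in> Pi" using hull_sub unfolding Pi_def by blast
    then show "\<exists>q\<in>DD. q \<notin> M' \<and> x * q \<in> Pi" using q by blast
  qed
  have xPi: "x \<in> st Pi" using x_in_st[OF so fc xD iPi _ pw Hq] PiSub by (simp add: xDD_def)
  have fPi: "frac_ideal Pi" using iPi by (simp add: ifrac_def)
  have fx: "frac_ideal xDD" unfolding xDD_def using frac_smult[OF frac_D xD(2)] .
  have "st Pi \<subseteq> st xDD" using st_mono[OF so fPi fx PiSub] .
  then have s1: "st Pi \<subseteq> xDD" using st_principal[OF so xD(2)] by (simp add: xDD_def)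
  have s2: "xDD \<subseteq> st Pi" using principal_sub[OF st_submod[OF so fPi] xPi] by (simp add: xDD_def)
  have "smult_set (emb x0) DD = st (ideal_prod_list Is)" using s1 s2 e1 PiEq by (simp add: xDD_def x_def)
  then show ?thesis using hIs by blast
qed

theorem theoremM:
  fixes st :: "'a::idom fract set \<Rightarrow> 'a fract set"
  assumes "star_operation st"
    and "finite_character st"
  shows "star_SH st \<longleftrightarrow>
     (finite_star_character st \<and>
      (\<forall>P Q. max_star_ideal st P \<and> max_star_ideal st Q \<and> P \<noteq> Q \<longrightarrow>
         \<not> (\<exists>R. nonzero_prime_ideal R \<and> R \<subseteq> P \<inter> Q)))"
proof
  assume SH: "star_SH st"
  show "finite_star_character st \<and>
      (\<forall>P Q. max_star_ideal st P \<and> max_star_ideal st Q \<and> P \<noteq> Q \<longrightarrow>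
         \<not> (\<exists>R. nonzero_prime_ideal R \<and> R \<subseteq> P \<inter> Q))"
    using SH_fsc[OF assms SH] SH_np[OF assms SH] by blast
next
  assume r: "finite_star_character st \<and>
      (\<forall>P Q. max_star_ideal st P \<and> max_star_ideal st Q \<and> P \<noteq> Q \<longrightarrow>
         \<not> (\<exists>R. nonzero_prime_ideal R \<and> R \<subseteq> P \<inter> Q))"
  show "star_SH st" unfolding star_SH_def
    using main21[OF assms conjunct1[OF r] conjunct2[OF r]] by blast
qed


end
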